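(* Let $d\ge3$, $h\ge1$, and let $\ell$ be a leaf (a vertex at distance $h$ from the root). Then the order of $\bar{\mathbf{x}}_\ell$ in $G(d,h)$ divides $$(d-1)^h\cdot\operatorname{lcm}\{d\,\theta(d,h+1),\theta(d,h),\theta(d,h-1),\dots,\theta(d,2)\},$$ where $\theta(d,m):=\frac{(d-1)^m-1}{d-2}$.
   Context: Let $\mathcal{T}(d,h)$ be the rooted tree in which the root $0$ has $d$ children, every vertex at distance $1,\dots,h-1$ from the root has $d-1$ children, and the vertices at distance $h$ are leaves. Let $V$ be its vertex set, $A$ its adjacency matrix, $\Delta := dI-A$, and $\Lambda\subset\mathbb{Z}^V$ the lattice spanned by the rows of $\Delta$. Then $G(d,h):=\mathbb{Z}^V/\Lambda$; $\{\mathbf{x}_i:i\in V\}$ is the standard basis of $\mathbb{Z}^V$ and $\bar{\mathbf{v}}$ denotes the image of $\mathbf{v}$ in $G(d,h)$. *)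

theory Defs
  imports Main
begin

text \<open>Vertices of the tree T(d,h) are encoded as paths from the root:
  the root is [], a vertex at distance k is a list of length k whose first entry
  (the choice of child of the root) is < d and whose later entries are < d-1.
  The children of a vertex v are the lists v @ [i].\<close>

definition tree_vertices :: "nat \<Rightarrow> nat \<Rightarrow> nat list set" where
  "tree_vertices d h = {xs. length xs \<le> h \<and> (xs \<noteq> [] \<longrightarrow> hd xs < d) \<and>
                            (\<forall>i \<in> set (tl xs). i < d - 1)}"

definition tree_adj :: "nat \<Rightarrow> nat \<Rightarrow> nat list \<Rightarrow> nat list \<Rightarrow> bool" where
  "tree_adj d h u v \<longleftrightarrow> u \<in> tree_vertices d h \<and> v \<in> tree_vertices d h \<and>
                         (\<exists>i. v = u @ [i] \<or> u = v @ [i])"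

definition tree_Delta :: "nat \<Rightarrow> nat \<Rightarrow> nat list \<Rightarrow> nat list \<Rightarrow> int" where
  "tree_Delta d h u v = (if u = v then int d else 0) - (if tree_adj d h u v then 1 else 0)"

text \<open>The lattice Lambda in Z^V spanned by the rows of Delta (vectors in Z^V are
  functions on vertices; only their values on V matter since all rows vanish off V).\<close>
definition tree_lattice :: "nat \<Rightarrow> nat \<Rightarrow> (nat list \<Rightarrow> int) set" where
  "tree_lattice d h = {w. \<exists>c :: nat list \<Rightarrow> int.
      w = (\<lambda>v. \<Sum>u\<in>tree_vertices d h. c u * tree_Delta d h u v)}"

definition basis_vec :: "nat list \<Rightarrow> nat list \<Rightarrow> int" where
  "basis_vec i = (\<lambda>j. if j = i then 1 else 0)"

definition G_order :: "nat \<Rightarrow> nat \<Rightarrow> (nat list \<Rightarrow> int) \<Rightarrow> nat" where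
  "G_order d h w = (if \<exists>n>0. (\<lambda>v. int n * w v) \<in> tree_lattice d h
      then (LEAST n. n > 0 \<and> (\<lambda>v. int n * w v) \<in> tree_lattice d h) else 0)"

text \<open>theta(d,m) = ((d-1)^m - 1)/(d-2); the division is exact for d \<ge> 3.\<close>
definition theta :: "nat \<Rightarrow> nat \<Rightarrow> nat" where
  "theta d m = ((d - 1) ^ m - 1) div (d - 2)"

end

theory Submission
  imports Defs
begin


definition T :: "nat \<Rightarrow> nat \<Rightarrow> nat" where
  "T d m = (\<Sum>i<m. (d-1)^i)"

lemma T_int: "d \<ge> 1 \<Longrightarrow> int (T d m) = (\<Sum>i<m. (int d - 1)^i)"
  unfolding T_def by (simp add: of_nat_diff)

lemma geo_Suc: "(\<Sum>i<Suc m. (x::int)^i) = x * (\<Sum>i<m. x^i) + 1"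
proof (induct m)
  case 0 then show ?case by simp
next
  case (Suc m)
  have "(\<Sum>i<Suc (Suc m). x^i) = (\<Sum>i<Suc m. x^i) + x^(Suc m)" by simp
  also have "\<dots> = x * (\<Sum>i<m. x^i) + 1 + x * x^m" using Suc by simp
  also have "\<dots> = x * (\<Sum>i<Suc m. x^i) + 1" by (simp add: algebra_simps)
  finally show ?case .
qed

lemma T_mult: "d \<ge> 2 \<Longrightarrow> (d - 2) * T d m = (d-1)^m - 1"
proof -
  assume d: "d \<ge> 2"
  have "int ((d-1)^m) - 1 = (int (d-1) - 1) * (\<Sum>i<m. int (d-1)^i)"
    using power_diff_1_eq[of "int (d-1)" m] by simp
  moreover have "(d-1)^m \<ge> 1" using d by simp
  ultimately have "int ((d-1)^m - 1) = int (d-2) * int (T d m)"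
    using d by (simp add: T_def of_nat_diff)
  then show ?thesis by (metis of_nat_eq_iff of_nat_mult)
qed

lemma theta_T: "d \<ge> 3 \<Longrightarrow> theta d m = T d m"
proof -
  assume "d \<ge> 3"
  then have "(d-2) > 0" by simp
  then show ?thesis unfolding theta_def using T_mult[of d m] \<open>d \<ge> 3\<close>
    by (metis Suc_1 eval_nat_numeral(3) le_Suc_eq nonzero_mult_div_cancel_left not_less_eq_eq zero_less_iff_neq_zero)
qed

lemma T_Suc_int: "d \<ge> 1 \<Longrightarrow> int (T d (Suc m)) = (int d - 1) * int (T d m) + 1"
  using T_int geo_Suc by simp

lemma T_Suc: "d \<ge> 1 \<Longrightarrow> T d (Suc m) = (d-1) * T d m + 1"
proof -
  assume "d \<ge> 1"
  then have "int (T d (Suc m)) = int ((d-1) * T d m + 1)"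
    using T_Suc_int[of d m] by (simp add: of_nat_diff)
  then show ?thesis by (simp only: of_nat_eq_iff)
qed

lemma T_pos: "m \<ge> 1 \<Longrightarrow> d \<ge> 1 \<Longrightarrow> T d m \<ge> 1"
proof -
  assume "m \<ge> 1" "d \<ge> 1"
  then have "T d (Suc (m-1)) = (d-1) * T d (m-1) + 1" using T_Suc by blast
  moreover have "Suc (m-1) = m" using \<open>m \<ge> 1\<close> by simp
  ultimately show ?thesis by simp
qed

lemma T_coprime: "d \<ge> 1 \<Longrightarrow> coprime (T d (Suc m)) (T d m)"
proof -
  assume "d \<ge> 1"
  have "gcd (T d m) ((d-1) * T d m + 1) = gcd (T d m) 1" by (rule gcd_add_mult)
  then have "gcd (T d (Suc m)) (T d m) = 1" using T_Suc[OF \<open>d \<ge> 1\<close>, of m] by (simp add: gcd.commute)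
  then show ?thesis by (simp add: coprime_iff_gcd_eq_1)
qed

lemma T0: "T d 0 = 0" and T1: "T d 1 = 1" and T2: "d \<ge> 1 \<Longrightarrow> T d 2 = d"
  by (auto simp: T_def numeral_2_eq_2)

lemma T_rec: "d \<ge> 1 \<Longrightarrow> int (T d (Suc (Suc m))) = int d * int (T d (Suc m)) - (int d - 1) * int (T d m)"
proof -
  assume d: "d \<ge> 1"
  have a: "int (T d (Suc (Suc m))) = (int d - 1) * int (T d (Suc m)) + 1" using T_Suc_int[OF d] .
  have b: "int (T d (Suc m)) = (int d - 1) * int (T d m) + 1" using T_Suc_int[OF d] .
  show ?thesis by (simp only: a b) (simp add: algebra_simps)
qed

lemma T_diff2: "d \<ge> 1 \<Longrightarrow> int (T d (m+2)) - int (T d m) = int d * (int d - 1)^m"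
proof -
  assume d: "d \<ge> 1"
  have "int (T d (m+2)) = int (T d m) + (int d - 1)^m + (int d - 1)^(Suc m)"
    using T_int[OF d] by (simp add: numeral_2_eq_2)
  then show ?thesis by (simp add: algebra_simps)
qed



fun lcp :: "nat list \<Rightarrow> nat list \<Rightarrow> nat" where
  "lcp (x#xs) (y#ys) = (if x = y then Suc (lcp xs ys) else 0)"
| "lcp _ _ = 0"

lemma lcp_le: "lcp u l \<le> length u"
  by (induct u l rule: lcp.induct) auto

lemma lcp_snoc: "lcp (u@[i]) l = (if lcp u l = length u \<and> length u < length l \<and> i = l ! length u
   then Suc (length u) else lcp u l)"
proof (induct u arbitrary: l)
  case Nil then show ?case by (cases l) auto
next
  case (Cons a u) then show ?case by (cases l) auto
qed

lemma lcp_self: "lcp l l = length l"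
  by (induct l) auto

lemma lcp_full: "lcp u l = length u \<Longrightarrow> length u = length l \<Longrightarrow> u = l"
  by (induct u l rule: lcp.induct) (auto split: if_splits)

lemma lcp_nil: "lcp [] l = 0" by simp

definition nch :: "nat \<Rightarrow> nat \<Rightarrow> nat list \<Rightarrow> nat" where
  "nch d h v = (if length v < h then (if v = [] then d else d - 1) else 0)"

lemma V_elems: "v \<in> tree_vertices d h \<Longrightarrow> d \<ge> 1 \<Longrightarrow> set v \<subseteq> {..<d}"
  unfolding tree_vertices_def by (cases v) auto

lemma V_finite: "d \<ge> 1 \<Longrightarrow> finite (tree_vertices d h)"
proof -
  assume d: "d \<ge> 1"
  have "tree_vertices d h \<subseteq> {xs. set xs \<subseteq> {..<d} \<and> length xs \<le> h}"
    using V_elems[OF _ d] by (auto simp: tree_vertices_def)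
  then show ?thesis using finite_lists_length_le[of "{..<d}" h] finite_subset by blast
qed

lemma snoc_in_V: "v \<in> tree_vertices d h \<Longrightarrow>
   (v@[i] \<in> tree_vertices d h \<longleftrightarrow> i < nch d h v)"
  unfolding tree_vertices_def nch_def by (cases v) auto

lemma butlast_in_V: "v \<in> tree_vertices d h \<Longrightarrow> butlast v \<in> tree_vertices d h"
  unfolding tree_vertices_def
  apply (cases v rule: rev_cases)
   apply simp
  apply (auto simp: butlast_append)
  by (metis append_Nil2 butlast.simps(2) butlast_append butlast_tl in_set_butlastD list.sel(1) list.sel(3) not_Cons_self2)

lemma nbrs: "v \<in> tree_vertices d h \<Longrightarrow>
  {u \<in> tree_vertices d h. tree_adj d h u v} =
   (if v = [] then {} else {butlast v}) \<union> (\<lambda>i. v@[i]) ` {..<nch d h v}"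
proof -
  assume v: "v \<in> tree_vertices d h"
  show ?thesis
  proof (rule set_eqI)
    fix u
    show "u \<in> {u \<in> tree_vertices d h. tree_adj d h u v} \<longleftrightarrow>
       u \<in> (if v = [] then {} else {butlast v}) \<union> (\<lambda>i. v@[i]) ` {..<nch d h v}"
    proof
      assume "u \<in> {u \<in> tree_vertices d h. tree_adj d h u v}"
      then have u: "u \<in> tree_vertices d h" and "\<exists>i. v = u @ [i] \<or> u = v @ [i]"
        unfolding tree_adj_def by auto
      then obtain i where "v = u @ [i] \<or> u = v @ [i]" by blast
      then show "u \<in> (if v = [] then {} else {butlast v}) \<union> (\<lambda>i. v@[i]) ` {..<nch d h v}"
      proof
        assume "v = u @ [i]" then show ?thesis by simp
      next
        assume "u = v @ [i]" then show ?thesis using snoc_in_V[OF v, of i] u by auto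
      qed
    next
      assume a: "u \<in> (if v = [] then {} else {butlast v}) \<union> (\<lambda>i. v@[i]) ` {..<nch d h v}"
      show "u \<in> {u \<in> tree_vertices d h. tree_adj d h u v}"
      proof (cases "u \<in> (\<lambda>i. v@[i]) ` {..<nch d h v}")
        case True
        then obtain i where "i < nch d h v" "u = v@[i]" by auto
        then show ?thesis using snoc_in_V[OF v, of i] v unfolding tree_adj_def by auto
      next
        case False
        then have "v \<noteq> []" "u = butlast v" using a by (auto split: if_splits)
        then have "v = u @ [last v]" by simp
        then show ?thesis using butlast_in_V[OF v] v \<open>u = butlast v\<close> unfolding tree_adj_def by blast
      qed
    qed
  qed
qed

lemma Delta_sum:
  assumes d: "d \<ge> 1" and v: "v \<in> tree_vertices d h"
  shows "(\<Sum>u\<in>tree_vertices d h. c u * tree_Delta d h u v) =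
     int d * c v - (if v = [] then 0 else c (butlast v)) - (\<Sum>i<nch d h v. c (v@[i]))"
proof -
  let ?V = "tree_vertices d h"
  have fin: "finite ?V" using V_finite[OF d] .
  have "(\<Sum>u\<in>?V. c u * tree_Delta d h u v) =
      (\<Sum>u\<in>?V. if u = v then int d * c u else 0) - (\<Sum>u\<in>?V. if tree_adj d h u v then c u else 0)"
  proof -
    have "\<And>u. c u * tree_Delta d h u v = (if u = v then int d * c u else 0) - (if tree_adj d h u v then c u else 0)"
      unfolding tree_Delta_def by (simp add: algebra_simps)
    then show ?thesis by (simp add: sum_subtractf)
  qed
  also have "(\<Sum>u\<in>?V. if u = v then int d * c u else 0) = int d * c v"
    using fin v by (simp add: sum.delta')
  also have "(\<Sum>u\<in>?V. if tree_adj d h u v then c u else 0) = (\<Sum>u\<in>{u\<in>?V. tree_adj d h u v}. c u)"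
    using fin by (simp add: sum.inter_filter)
  also have "\<dots> = (\<Sum>u\<in>(if v = [] then {} else {butlast v}) \<union> (\<lambda>i. v@[i]) ` {..<nch d h v}. c u)"
    using nbrs[OF v] by simp
  also have "\<dots> = (\<Sum>u\<in>(if v = [] then {} else {butlast v}). c u) + (\<Sum>u\<in>(\<lambda>i. v@[i]) ` {..<nch d h v}. c u)"
    by (rule sum.union_disjoint) (auto split: if_splits dest: arg_cong[where f=length])
  also have "(\<Sum>u\<in>(\<lambda>i. v@[i]) ` {..<nch d h v}. c u) = (\<Sum>i<nch d h v. c (v@[i]))"
    by (subst sum.reindex) (auto simp: inj_on_def)
  also have "(\<Sum>u\<in>(if v = [] then {} else {butlast v}). c u) = (if v = [] then 0 else c (butlast v))"
    by simp
  finally show ?thesis by simp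
qed



definition LL :: "nat \<Rightarrow> nat \<Rightarrow> nat" where
  "LL d h = Lcm ({d * theta d (h + 1)} \<union> theta d ` {2..h})"
definition NN :: "nat \<Rightarrow> nat \<Rightarrow> int" where
  "NN d h = int ((d - 1) ^ h * LL d h)"
definition tt :: "nat \<Rightarrow> nat \<Rightarrow> int" where
  "tt d m = int (T d m)"
definition gg :: "nat \<Rightarrow> nat \<Rightarrow> nat \<Rightarrow> int" where
  "gg d h j = NN d h div int (d * (d-1)^h * T d (Suc h))
     + (\<Sum>i<j. NN d h div (tt d (Suc (h - i)) * tt d (h - i)))"
definition cc :: "nat \<Rightarrow> nat \<Rightarrow> nat list \<Rightarrow> nat list \<Rightarrow> int" where
  "cc d h l w = gg d h (lcp w l) * tt d (Suc h - length w)"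

context
  fixes d h :: nat
  assumes d3: "d \<ge> 3" and h1: "h \<ge> 1"
begin

lemma d1: "d \<ge> 1" using d3 by simp

lemma tt_pos: "m \<ge> 1 \<Longrightarrow> tt d m > 0"
  unfolding tt_def using T_pos[of m d] d1 by simp

lemma L_dvd0: "d * T d (Suc h) dvd LL d h"
  unfolding LL_def using theta_T[OF d3] by (intro dvd_Lcm) simp

lemma L_dvd_theta: "2 \<le> m \<Longrightarrow> m \<le> h \<Longrightarrow> T d m dvd LL d h"
  unfolding LL_def using theta_T[OF d3] by (intro dvd_Lcm) (metis UnI2 atLeastAtMost_iff image_eqI)

lemma L_dvd_pair: "1 \<le> m \<Longrightarrow> m \<le> h \<Longrightarrow> T d (Suc m) * T d m dvd LL d h"
proof -
  assume m: "1 \<le> m" "m \<le> h"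
  have a: "T d (Suc m) dvd LL d h"
  proof (cases "Suc m \<le> h")
    case True then show ?thesis using L_dvd_theta m by simp
  next
    case False then have "Suc m = Suc h" using m by simp
    then show ?thesis using L_dvd0 by (metis dvd_mult_right)
  qed
  have b: "T d m dvd LL d h"
  proof (cases "m = 1")
    case True then show ?thesis using T1 by simp
  next
    case False then show ?thesis using L_dvd_theta m by simp
  qed
  show ?thesis using divides_mult[OF a b T_coprime[OF d1]] .
qed

lemma L_pos: "LL d h > 0"
proof -
  have "0 \<notin> {d * theta d (h + 1)} \<union> theta d ` {2..h}"
  proof -
    have p: "\<And>m. m \<ge> 1 \<Longrightarrow> theta d m \<ge> 1" using T_pos d1 theta_T[OF d3] by simp
    have "\<And>x. 2 \<le> x \<Longrightarrow> theta d x \<noteq> 0"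
    proof -
      fix x :: nat assume "2 \<le> x" then have "x \<ge> 1" by simp
      then show "theta d x \<noteq> 0" using p[of x] by simp
    qed
    moreover have "d * theta d (h+1) \<noteq> 0" using p[of "h+1"] d3 by simp
    ultimately show ?thesis by force
  qed
  moreover have "finite ({d * theta d (h + 1)} \<union> theta d ` {2..h})" by simp
  ultimately have "LL d h \<noteq> 0" unfolding LL_def using Lcm_0_iff_nat by blast
  then show ?thesis by simp
qed

lemma NN_pos: "NN d h > 0"
  unfolding NN_def using L_pos d3 by simp

lemma G0: "int (d * (d-1)^h * T d (Suc h)) * gg d h 0 = NN d h"
proof -
  have "d * T d (Suc h) * (d-1)^h dvd (d - 1) ^ h * LL d h" using L_dvd0 by (simp add: mult_dvd_mono)
  then have "int (d * (d-1)^h * T d (Suc h)) dvd NN d h" unfolding NN_def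
    by (simp only: int_dvd_int_iff) (simp add: ac_simps)
  then show ?thesis unfolding gg_def by simp
qed

lemma Gs: "j < h \<Longrightarrow> tt d (Suc (h - j)) * tt d (h - j) * (gg d h (Suc j) - gg d h j) = NN d h"
proof -
  assume j: "j < h"
  have "T d (Suc (h-j)) * T d (h-j) dvd LL d h" using L_dvd_pair[of "h-j"] j by simp
  then have "T d (Suc (h-j)) * T d (h-j) dvd (d-1)^h * LL d h" by (simp add: dvd_mult)
  then have "tt d (Suc (h - j)) * tt d (h - j) dvd NN d h" unfolding NN_def tt_def
    by (metis int_dvd_int_iff of_nat_mult)
  moreover have "gg d h (Suc j) - gg d h j = NN d h div (tt d (Suc (h - j)) * tt d (h - j))"
    unfolding gg_def by simp
  ultimately show ?thesis by simp
qed

end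


lemma sum_if_one: "i0 < n \<Longrightarrow> (\<Sum>i<n. if i = i0 then a else b) = a + (int n - 1) * (b::int)"
proof -
  assume i0: "i0 < n"
  have "(\<Sum>i<n. if i = i0 then a else b) = (\<Sum>i<n. b + (if i = i0 then a - b else 0))"
    by (rule sum.cong) auto
  also have "\<dots> = int n * b + (a - b)" using i0 by (simp add: sum.distrib)
  finally show ?thesis by (simp add: algebra_simps)
qed

lemma alg_root:
  fixes A B C D P N g0 g1 :: int
  shows "A = D*B - (D-1)*C \<Longrightarrow> A - C = D*P \<Longrightarrow> B*C*(g1-g0) = N \<Longrightarrow> D*P*B*g0 = N
    \<Longrightarrow> B*(D*g0*B - g1*C - (D-1)*g0*C) = 0"
  by algebra

lemma alg_mid:
  fixes A B C D N gp gk gn :: int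
  shows "A = D*B - (D-1)*C \<Longrightarrow> A*B*(gk - gp) = N \<Longrightarrow> B*C*(gn - gk) = N
    \<Longrightarrow> B*(D*gk*B - gp*A - (gn*C + (D-2)*gk*C)) = 0"
  by algebra

lemma onpath_parent:
  assumes "lcp v l = length v" "v \<noteq> []"
  shows "lcp (butlast v) l = length v - 1"
proof -
  define u where "u = butlast v"
  have vu: "v = u @ [last v]" using assms u_def by simp
  have "lcp (u @ [last v]) l = (if lcp u l = length u \<and> length u < length l \<and> last v = l ! length u
   then Suc (length u) else lcp u l)" by (rule lcp_snoc)
  then have e: "lcp v l = (if lcp u l = length u \<and> length u < length l \<and> last v = l ! length u
   then Suc (length u) else lcp u l)" unfolding vu[symmetric] .
  have "length v = Suc (length u)" using vu by (metis length_append_singleton)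
  moreover have "lcp u l \<le> length u" by (rule lcp_le)
  ultimately show ?thesis using e assms(1) unfolding u_def[symmetric] by (auto split: if_splits)
qed

context
  fixes d h :: nat and l :: "nat list"
  assumes d3: "d \<ge> 3" and h1: "h \<ge> 1" and lV: "l \<in> tree_vertices d h" and ll: "length l = h"
begin

lemma d1': "d \<ge> 1" using d3 by simp

lemma l_entry: "1 \<le> k \<Longrightarrow> k < h \<Longrightarrow> l ! k < d - 1"
proof -
  assume k: "1 \<le> k" "k < h"
  then obtain a r where l: "l = a # r" using ll by (cases l) auto
  then have "l ! k = r ! (k - 1)" using k by (cases k) auto
  moreover have "r ! (k-1) \<in> set r" using k l ll by simp
  ultimately show ?thesis using lV l unfolding tree_vertices_def by auto
qed

lemma l_entry0: "l ! 0 < d"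
  using lV h1 ll unfolding tree_vertices_def by (cases l) auto

lemma t_rec': "tt d (Suc (Suc m)) = int d * tt d (Suc m) - (int d - 1) * tt d m"
  unfolding tt_def using T_rec[OF d1'] .

lemma t1: "tt d 1 = 1" unfolding tt_def using T1 by simp
lemma t2: "tt d 2 = int d" unfolding tt_def using T2 d1' by simp

lemma case_off:
  assumes v: "v \<in> tree_vertices d h" and j: "lcp v l < length v"
  shows "int d * cc d h l v - (if v = [] then 0 else cc d h l (butlast v)) - (\<Sum>i<nch d h v. cc d h l (v@[i])) = 0"
proof -
  define k where "k = length v"
  define j where "j = lcp v l"
  have vne: "v \<noteq> []" using j by auto
  define u where "u = butlast v"
  have vu: "v = u @ [last v]" using vne u_def by simp
  have ku: "length u = k - 1" using u_def k_def by simp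
  have kh: "k \<le> h" using v k_def unfolding tree_vertices_def by simp
  have k1: "k \<ge> 1" using vne k_def by (cases v) auto
  have "lcp (u @ [last v]) l = (if lcp u l = length u \<and> length u < length l \<and> last v = l ! length u
   then Suc (length u) else lcp u l)" by (rule lcp_snoc)
  then have e: "j = (if lcp u l = length u \<and> length u < length l \<and> last v = l ! length u
   then Suc (length u) else lcp u l)" unfolding vu[symmetric] j_def .
  have lu: "lcp u l = j"
  proof (cases "lcp u l = length u \<and> length u < length l \<and> last v = l ! length u")
    case True
    then have "j = k" using e ku k1 by simp
    then show ?thesis using j j_def k_def by simp
  next
    case False then show ?thesis using e by simp
  qed
  have cu: "cc d h l (butlast v) = gg d h j * tt d (Suc (Suc (h - k)))"
    unfolding cc_def u_def[symmetric] lu using ku kh k1 by (simp add: Suc_diff_le)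
  have cv: "cc d h l v = gg d h j * tt d (Suc (h - k))"
    unfolding cc_def j_def k_def using kh k_def by (simp add: Suc_diff_le)
  show ?thesis
  proof (cases "k < h")
    case True
    have nch: "nch d h v = d - 1" using True vne k_def unfolding nch_def by simp
    have "\<And>i. cc d h l (v@[i]) = gg d h j * tt d (h - k)"
      unfolding cc_def using lcp_snoc[of v _ l] j j_def k_def by auto
    then have S: "(\<Sum>i<nch d h v. cc d h l (v@[i])) = (int d - 1) * (gg d h j * tt d (h - k))"
      using nch d3 by (simp add: of_nat_diff)
    show ?thesis using vne unfolding S cu cv t_rec'[of "h-k"] by (simp add: algebra_simps)
  next
    case False
    then have kh': "k = h" using kh by simp
    have nch: "nch d h v = 0" using kh' k_def unfolding nch_def by simp
    show ?thesis using vne unfolding nch cu cv kh' using t1 t2 by (simp add: numeral_2_eq_2)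
  qed
qed

lemma case_root:
  "int d * cc d h l [] - (\<Sum>i<nch d h []. cc d h l ([]@[i])) = 0"
proof -
  have nch: "nch d h [] = d" using h1 unfolding nch_def by simp
  have ci: "\<And>i. cc d h l ([]@[i]) = (if i = l ! 0 then gg d h 1 * tt d h else gg d h 0 * tt d h)"
    unfolding cc_def using lcp_snoc[of "[]" _ l] ll h1 by auto
  have S: "(\<Sum>i<nch d h []. cc d h l ([]@[i])) = gg d h 1 * tt d h + (int d - 1) * (gg d h 0 * tt d h)"
    unfolding nch ci using sum_if_one[OF l_entry0] by simp
  have cv: "cc d h l [] = gg d h 0 * tt d (Suc h)" unfolding cc_def by simp
  have e1: "tt d (Suc (Suc h)) = int d * tt d (Suc h) - (int d - 1) * tt d h" by (rule t_rec')
  have e2: "tt d (Suc (Suc h)) - tt d h = int d * (int d - 1)^h"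
    using T_diff2[OF d1', of h] unfolding tt_def by (simp add: numeral_2_eq_2)
  have e3: "tt d (Suc h) * tt d h * (gg d h 1 - gg d h 0) = NN d h" using Gs[OF d3 h1, of 0] h1 by simp
  have e4: "int d * (int d - 1)^h * tt d (Suc h) * gg d h 0 = NN d h" using G0[OF d3 h1] d1'
    unfolding tt_def by (simp add: of_nat_diff)
  have "tt d (Suc h) * (int d * cc d h l [] - (\<Sum>i<nch d h []. cc d h l ([]@[i]))) = 0"
    unfolding S cv using alg_root[OF e1 e2 e3 e4] by (simp add: algebra_simps)
  moreover have "tt d (Suc h) > 0" using tt_pos[OF d3 h1] by simp
  ultimately show ?thesis by simp
qed

lemma case_mid:
  assumes v: "v \<in> tree_vertices d h" and on: "lcp v l = length v"
    and k0: "0 < length v" and kh: "length v < h"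
  shows "int d * cc d h l v - cc d h l (butlast v) - (\<Sum>i<nch d h v. cc d h l (v@[i])) = 0"
proof -
  define k where "k = length v"
  have vne: "v \<noteq> []" using k0 by auto
  have nch: "nch d h v = d - 1" using kh vne unfolding nch_def by simp
  have ci: "\<And>i. cc d h l (v@[i]) = (if i = l ! k then gg d h (Suc k) * tt d (h-k) else gg d h k * tt d (h-k))"
    unfolding cc_def using lcp_snoc[of v _ l] ll on kh k_def by auto
  have S: "(\<Sum>i<nch d h v. cc d h l (v@[i])) = gg d h (Suc k) * tt d (h-k) + (int (d-1) - 1) * (gg d h k * tt d (h-k))"
  proof -
    have kk: "1 \<le> k" "k < h" using k0 kh k_def by (auto simp: Suc_le_eq)
    show ?thesis unfolding nch ci by (rule sum_if_one[OF l_entry[OF kk]])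
  qed
  have S': "int (d-1) - 1 = int d - 2" using d3 by simp
  have cv: "cc d h l v = gg d h k * tt d (Suc (h-k))" unfolding cc_def on k_def[symmetric] using kh k_def
    by (simp add: Suc_diff_le)
  have "length v \<ge> 1" using k0 by linarith
  then have hk: "Suc h - length (butlast v) = Suc (Suc (h - k))" using kh k_def by simp
  have cu: "cc d h l (butlast v) = gg d h (k-1) * tt d (Suc (Suc (h-k)))" unfolding cc_def hk
    using onpath_parent[OF on vne] k_def by simp
  have e1: "tt d (Suc (Suc (h-k))) = int d * tt d (Suc (h-k)) - (int d - 1) * tt d (h-k)" by (rule t_rec')
  have e2: "tt d (Suc (Suc (h-k))) * tt d (Suc (h-k)) * (gg d h k - gg d h (k-1)) = NN d h"
    using Gs[OF d3 h1, of "k-1"] k0 kh k_def by (simp add: Suc_diff_le)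
  have e3: "tt d (Suc (h-k)) * tt d (h-k) * (gg d h (Suc k) - gg d h k) = NN d h"
    using Gs[OF d3 h1, of "k"] kh k_def by simp
  have "tt d (Suc (h-k)) * (int d * cc d h l v - cc d h l (butlast v) - (\<Sum>i<nch d h v. cc d h l (v@[i]))) = 0"
    unfolding S S' cv cu using alg_mid[OF e1 e2 e3] by (simp add: algebra_simps)
  moreover have "tt d (Suc (h-k)) > 0" using tt_pos[OF d3 h1] by simp
  ultimately show ?thesis by simp
qed

lemma case_leaf:
  "int d * cc d h l l - cc d h l (butlast l) - (\<Sum>i<nch d h l. cc d h l (l@[i])) = NN d h"
proof -
  have lne: "l \<noteq> []" using ll h1 by auto
  have nch: "nch d h l = 0" using ll unfolding nch_def by simp
  have cv: "cc d h l l = gg d h h" unfolding cc_def lcp_self ll using t1 by simp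
  have cu: "cc d h l (butlast l) = gg d h (h-1) * tt d 2" unfolding cc_def
    using onpath_parent[OF lcp_self lne] ll h1 by (simp add: numeral_2_eq_2)
  have e: "tt d 2 * tt d 1 * (gg d h h - gg d h (h-1)) = NN d h"
    using Gs[OF d3 h1, of "h-1"] h1 by (simp add: numeral_2_eq_2)
  show ?thesis unfolding nch cv cu using e t1 t2 by (simp add: algebra_simps)
qed

end


lemma lattice_comb:
  assumes "a \<in> tree_lattice d h" "b \<in> tree_lattice d h"
  shows "(\<lambda>v. a v - q * b v) \<in> tree_lattice d h"
proof -
  obtain ca where a: "a = (\<lambda>v. \<Sum>u\<in>tree_vertices d h. ca u * tree_Delta d h u v)"
    using assms(1) unfolding tree_lattice_def by blast
  obtain cb where b: "b = (\<lambda>v. \<Sum>u\<in>tree_vertices d h. cb u * tree_Delta d h u v)"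
    using assms(2) unfolding tree_lattice_def by blast
  have eq: "(\<lambda>v. a v - q * b v) = (\<lambda>v. \<Sum>u\<in>tree_vertices d h. (ca u - q * cb u) * tree_Delta d h u v)"
    unfolding a b by (simp add: sum_subtractf sum_distrib_left algebra_simps)
  show ?thesis unfolding tree_lattice_def mem_Collect_eq by (rule exI[where x="\<lambda>u. ca u - q * cb u"]) (rule eq)
qed

lemma G_order_dvd:
  assumes n: "n > 0" and w: "(\<lambda>v. int n * w v) \<in> tree_lattice d h"
  shows "G_order d h w dvd n"
proof -
  let ?P = "\<lambda>n. n > 0 \<and> (\<lambda>v. int n * w v) \<in> tree_lattice d h"
  have ex: "\<exists>n>0. (\<lambda>v. int n * w v) \<in> tree_lattice d h" using n w by blast
  define n0 where "n0 = (LEAST n. ?P n)"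
  have G: "G_order d h w = n0" unfolding G_order_def n0_def using ex by simp
  have P0: "?P n0" unfolding n0_def by (rule LeastI[of ?P n]) (use n w in simp)
  define r where "r = n mod n0"
  have rl: "r < n0" using P0 r_def by simp
  have "(\<lambda>v. int n * w v - int (n div n0) * (int n0 * w v)) \<in> tree_lattice d h"
    using lattice_comb[OF w conjunct2[OF P0]] .
  moreover have "(\<lambda>v. int n * w v - int (n div n0) * (int n0 * w v)) = (\<lambda>v. int r * w v)"
  proof
    fix v
    have "int n = int (n div n0) * int n0 + int r" unfolding r_def
      by (metis div_mult_mod_eq of_nat_add of_nat_mult)
    then show "int n * w v - int (n div n0) * (int n0 * w v) = int r * w v" by (simp add: algebra_simps)
  qed
  ultimately have rL: "(\<lambda>v. int r * w v) \<in> tree_lattice d h" by simp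
  have "r = 0"
  proof (rule ccontr)
    assume "r \<noteq> 0"
    then have "?P r" using rL by simp
    then have "n0 \<le> r" unfolding n0_def by (rule Least_le)
    then show False using rl by simp
  qed
  then show ?thesis unfolding G r_def by (simp add: dvd_eq_mod_eq_0)
qed

context
  fixes d h :: nat and l :: "nat list"
  assumes d3: "d \<ge> 3" and h1: "h \<ge> 1" and lV: "l \<in> tree_vertices d h" and ll: "length l = h"
begin

lemma lattice_mem: "(\<lambda>v. NN d h * basis_vec l v) \<in> tree_lattice d h"
proof -
  have d1: "d \<ge> 1" using d3 by simp
  have "(\<lambda>v. NN d h * basis_vec l v) = (\<lambda>v. \<Sum>u\<in>tree_vertices d h. cc d h l u * tree_Delta d h u v)"
  proof
    fix v
    show "NN d h * basis_vec l v = (\<Sum>u\<in>tree_vertices d h. cc d h l u * tree_Delta d h u v)"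
    proof (cases "v \<in> tree_vertices d h")
      case False
      then have "\<And>u. u \<in> tree_vertices d h \<Longrightarrow> tree_Delta d h u v = 0"
        unfolding tree_Delta_def tree_adj_def by auto
      moreover have "basis_vec l v = 0" using False lV unfolding basis_vec_def by auto
      ultimately show ?thesis by simp
    next
      case v: True
      note DS = Delta_sum[OF d1 v, of "cc d h l"]
      have kh: "length v \<le> h" using v unfolding tree_vertices_def by simp
      show ?thesis
      proof (cases "lcp v l < length v")
        case True
        have "v \<noteq> l" using True lcp_self by auto
        then show ?thesis using DS case_off[OF d3 h1 lV ll v True] unfolding basis_vec_def by simp
      next
        case False
        then have on: "lcp v l = length v" using lcp_le[of v l] by simp
        show ?thesis
        proof (cases "v = []")
          case True
          have "v \<noteq> l" using True ll h1 by auto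
          then show ?thesis using DS case_root[OF d3 h1 lV ll] True unfolding basis_vec_def by simp
        next
          case vne: False
          show ?thesis
          proof (cases "length v < h")
            case True
            have "v \<noteq> l" using True ll by auto
            moreover have "0 < length v" using vne by simp
            ultimately show ?thesis using DS case_mid[OF d3 h1 lV ll v on _ True] vne
              unfolding basis_vec_def by simp
          next
            case False
            then have "v = l" using lcp_full[OF on] kh ll by simp
            then show ?thesis using DS case_leaf[OF d3 h1 lV ll] vne unfolding basis_vec_def by simp
          qed
        qed
      qed
    qed
  qed
  then show ?thesis unfolding tree_lattice_def by blast
qed

end

theorem lemma7p3:
  fixes d h :: nat and l :: "nat list"
  assumes "d \<ge> 3" and "h \<ge> 1"
    and "l \<in> tree_vertices d h" and "length l = h"
  shows "G_order d h (basis_vec l) dvd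
           (d - 1) ^ h * Lcm ({d * theta d (h + 1)} \<union> theta d ` {2..h})"
proof -
  have "(d - 1) ^ h * Lcm ({d * theta d (h + 1)} \<union> theta d ` {2..h}) = (d-1)^h * LL d h"
    unfolding LL_def ..
  moreover have "(\<lambda>v. int ((d-1)^h * LL d h) * basis_vec l v) \<in> tree_lattice d h"
    using lattice_mem[OF assms] unfolding NN_def .
  moreover have "(d-1)^h * LL d h > 0" using L_pos[OF assms(1,2)] assms(1) by simp
  ultimately show ?thesis using G_order_dvd by metis
qed


end
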